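(* Let $\beta>1$ be a Yrrap number. For $w\in\mathcal{L}(\Sigma_{-\beta})$ let $g_\beta(w)$ be the minimal integer $i\ge0$ such that there exist $v\in\mathcal{L}_i(\Sigma_{-\beta})$ and integers $0\le c<d\le b$ with $wvc,wvd\in\mathcal{L}(\Sigma_{-\beta})$, and let $g_\beta(n)=\sup_{w\in\mathcal{L}_n(\Sigma_{-\beta})}g_\beta(w)$. If $\lim_{n\to\infty}g_\beta(n)/n=0$, then $$\liminf_{n\to\infty}\inf_{w\in\mathcal{L}_n(\Sigma_{-\beta})}\Big(\frac1n\log L_{-\beta}([w])+\log\beta\Big)\ge0.$$
   Context: $(-\beta)$-transformation: $b=\max\{k\in\mathbb{Z}:k<\beta\}$, $I_i=(i/\beta,(i+1)/\beta)$ ($0\le i\le b-1$), $I_b=(b/\beta,1)$, $T_{-\beta}(x)=-\beta x+(i+1)$ on $I_i$; for $x\notin\bigcup_{i\ge0}T_{-\beta}^{-i}\{0,1/\beta,\dots,b/\beta,1\}$, $(i'(x))_k=j$ iff $T_{-\beta}^k(x)\in I_j$; $i'(1)=\lim_{x\to1^-}i'(x)$. Case 1: $i'(1)=(w0)^\infty$ for some finite word $w$; then $T_{-\beta}(0)=1$, $T_{-\beta}(i/\beta)=0$ ($1\le i\le b$), $T_{-\beta}(1)=\lim_{x\to1^-}T_{-\beta}(x)$. Case 2: otherwise; $T_{-\beta}(0)=1$, $T_{-\beta}(i/\beta)=1$ ($1\le i\le b$), $T_{-\beta}(1)=\lim_{x\to1^-}T_{-\beta}(x)$. Yrrap: the $T_{-\beta}$-orbit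 of $1$ is eventually periodic. $\Sigma_{-\beta}$: closure in $\{0,\dots,b\}^{\mathbb{Z}_+}$ of the set of $i'(x)$ over non-preimages $x$ of partition points, with shift $\sigma$; $\mathcal{L}(\Sigma_{-\beta})$ its language, $\mathcal{L}_n$ words of length $n$, $[w]$ cylinder sets. $\Phi\colon[0,1]\to\Sigma_{-\beta}$: in Case 1 let $J_0=[0,1/\beta]$, $J_i=(i/\beta,(i+1)/\beta]$ ($1\le i\le b-1$), $J_b=(b/\beta,1]$; in Case 2 let $J_i=[i/\beta,(i+1)/\beta)$ ($0\le i\le b-1$), $J_b=[b/\beta,1]$; $(\Phi(x))_i=j$ iff $T_{-\beta}^i(x)\in J_j$. $L_{-\beta}=L\circ\Phi^{-1}$, $L$ Lebesgue measure. *)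

theory Defs
  imports "HOL-Analysis.Analysis"
begin

definition bnum :: "real \<Rightarrow> nat" where
  "bnum \<beta> = nat (GREATEST k::int. of_int k < \<beta>)"

text \<open>Generic formula of T on the open intervals I_i: T x = -beta x + (i+1) where i = floor(beta x).\<close>
definition Tgen :: "real \<Rightarrow> real \<Rightarrow> real" where
  "Tgen \<beta> x = of_int \<lfloor>\<beta> * x\<rfloor> + 1 - \<beta> * x"

definition ppts :: "real \<Rightarrow> real set" where
  "ppts \<beta> = {1} \<union> {real i / \<beta> | i. i \<le> bnum \<beta>}"

definition Gset :: "real \<Rightarrow> real set" where
  "Gset \<beta> = {x \<in> {0..1}. \<forall>k. (Tgen \<beta> ^^ k) x \<notin> ppts \<beta>}"

text \<open>The coding i'(x) of non-preimages: digit k is j iff T^k x lies in I_j.\<close>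
definition idig :: "real \<Rightarrow> real \<Rightarrow> nat \<Rightarrow> nat" where
  "idig \<beta> x k = nat \<lfloor>\<beta> * (Tgen \<beta> ^^ k) x\<rfloor>"

text \<open>i'(1) = lim_{x -> 1^-} i'(x) (product topology on sequences of naturals).\<close>
definition ione :: "real \<Rightarrow> nat \<Rightarrow> nat" where
  "ione \<beta> = (THE s. (idig \<beta> \<longlongrightarrow> s) (at 1 within Gset \<beta>))"

definition case1 :: "real \<Rightarrow> bool" where
  "case1 \<beta> \<longleftrightarrow> (\<exists>w::nat list. ione \<beta> = (\<lambda>k. (w @ [0]) ! (k mod (length w + 1))))"

definition Tfull :: "real \<Rightarrow> real \<Rightarrow> real" where
  "Tfull \<beta> x =
     (if x = 0 then 1
      else if x = 1 then Lim (at_left 1) (Tgen \<beta>)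
      else if x \<in> {real i / \<beta> | i. 1 \<le> i \<and> i \<le> bnum \<beta>} then (if case1 \<beta> then 0 else 1)
      else Tgen \<beta> x)"

definition yrrap :: "real \<Rightarrow> bool" where
  "yrrap \<beta> \<longleftrightarrow> (\<exists>m p. p > 0 \<and> (Tfull \<beta> ^^ (m + p)) 1 = (Tfull \<beta> ^^ m) 1)"

definition Sigma_mb :: "real \<Rightarrow> (nat \<Rightarrow> nat) set" where
  "Sigma_mb \<beta> = closure (idig \<beta> ` Gset \<beta>)"

definition lang :: "real \<Rightarrow> nat list set" where
  "lang \<beta> = {w. \<exists>s\<in>Sigma_mb \<beta>. \<exists>k. \<forall>j<length w. s (k + j) = w ! j}"

definition langn :: "real \<Rightarrow> nat \<Rightarrow> nat list set" where
  "langn \<beta> n = {w \<in> lang \<beta>. length w = n}"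

definition cyl :: "real \<Rightarrow> nat list \<Rightarrow> (nat \<Rightarrow> nat) set" where
  "cyl \<beta> w = {s \<in> Sigma_mb \<beta>. \<forall>j<length w. s j = w ! j}"

definition Jset :: "real \<Rightarrow> nat \<Rightarrow> real set" where
  "Jset \<beta> j =
     (if case1 \<beta> then
        (if j = 0 then {0..1/\<beta>}
         else if j < bnum \<beta> then {real j/\<beta><..(real j + 1)/\<beta>}
         else {real (bnum \<beta>)/\<beta><..1})
      else
        (if j < bnum \<beta> then {real j/\<beta>..<(real j + 1)/\<beta>}
         else {real (bnum \<beta>)/\<beta>..1}))"

definition Phi :: "real \<Rightarrow> real \<Rightarrow> nat \<Rightarrow> nat" where
  "Phi \<beta> x i = (THE j. j \<le> bnum \<beta> \<and> (Tfull \<beta> ^^ i) x \<in> Jset \<beta> j)"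

text \<open>L_{-beta} = Lebesgue measure on [0,1] pushed forward by Phi, evaluated on a cylinder.\<close>
definition Lmb :: "real \<Rightarrow> nat list \<Rightarrow> real" where
  "Lmb \<beta> w = measure lborel {x \<in> {0..1}. Phi \<beta> x \<in> cyl \<beta> w}"

text \<open>g_beta(w) and g_beta(n), valued in the extended reals (Inf of empty set = infinity).\<close>
definition gw :: "real \<Rightarrow> nat list \<Rightarrow> ereal" where
  "gw \<beta> w = Inf {ereal (real i) | i. \<exists>v \<in> langn \<beta> i. \<exists>c d. c < d \<and> d \<le> bnum \<beta> \<and>
                     w @ v @ [c] \<in> lang \<beta> \<and> w @ v @ [d] \<in> lang \<beta>}"

definition gn :: "real \<Rightarrow> nat \<Rightarrow> ereal" where
  "gn \<beta> n = (SUP w \<in> langn \<beta> n. gw \<beta> w)"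

definition elog :: "real \<Rightarrow> ereal" where
  "elog x = (if x > 0 then ereal (ln x) else -\<infinity>)"

end

theory Submission
  imports Defs
begin



lemma bnum_eq:
  assumes "\<beta> > 1"
  shows "int (bnum \<beta>) = \<lceil>\<beta>\<rceil> - 1" "real (bnum \<beta>) < \<beta>" "\<beta> \<le> real (bnum \<beta>) + 1" "bnum \<beta> \<ge> 1"
proof -
  have g: "(GREATEST k::int. of_int k < \<beta>) = \<lceil>\<beta>\<rceil> - 1"
  proof (rule Greatest_equality)
    show "real_of_int (\<lceil>\<beta>\<rceil> - 1) < \<beta>" by linarith
    fix y :: int assume "real_of_int y < \<beta>"
    then show "y \<le> \<lceil>\<beta>\<rceil> - 1" proof -
      have "real_of_int y < real_of_int \<lceil>\<beta>\<rceil>" using \<open>real_of_int y < \<beta>\<close> le_of_int_ceiling[of \<beta>] by linarith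
      then show ?thesis by simp
    qed
  qed
  have c: "\<lceil>\<beta>\<rceil> \<ge> 2" proof -
    have "1 < \<lceil>\<beta>\<rceil>" using assms by (simp add: less_ceiling_iff)
    then show ?thesis by simp
  qed
  show "int (bnum \<beta>) = \<lceil>\<beta>\<rceil> - 1" unfolding bnum_def g using c by simp
  then show "real (bnum \<beta>) < \<beta>" "\<beta> \<le> real (bnum \<beta>) + 1" "bnum \<beta> \<ge> 1"
    using c by (simp_all add: of_nat_eq_iff[symmetric]; linarith?)+
qed




lemma Tgen_pos: "0 < Tgen \<beta> x" and Tgen_le1: "Tgen \<beta> x \<le> 1"
  unfolding Tgen_def by linarith+

lemma Tgen_eq: "\<lfloor>\<beta>*x\<rfloor> = a \<Longrightarrow> Tgen \<beta> x = of_int a + 1 - \<beta>*x"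
  unfolding Tgen_def by simp

lemma Tgen_iter_range: "x \<in> {0..1} \<Longrightarrow> (Tgen \<beta> ^^ k) x \<in> {0..1}"
  by (cases k) (auto simp: less_imp_le[OF Tgen_pos] Tgen_le1)

lemma Gset_iter: "x \<in> Gset \<beta> \<Longrightarrow> (Tgen \<beta> ^^ k) x \<in> Gset \<beta>"
proof -
  assume x: "x \<in> Gset \<beta>"
  have "(Tgen \<beta> ^^ k) x \<in> {0..1}" using x Tgen_iter_range unfolding Gset_def by blast
  moreover have "\<forall>m. (Tgen \<beta> ^^ m) ((Tgen \<beta> ^^ k) x) \<notin> ppts \<beta>"
  proof
    fix m
    have "(Tgen \<beta> ^^ m) ((Tgen \<beta> ^^ k) x) = (Tgen \<beta> ^^ (m + k)) x" by (simp add: funpow_add)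
    thus "(Tgen \<beta> ^^ m) ((Tgen \<beta> ^^ k) x) \<notin> ppts \<beta>" using x unfolding Gset_def by simp
  qed
  ultimately show ?thesis unfolding Gset_def by blast
qed

lemma zero_ppts: "0 \<in> ppts \<beta>" and one_ppts: "1 \<in> ppts \<beta>"
  unfolding ppts_def by force+

lemma d_ppts: "d \<le> bnum \<beta> \<Longrightarrow> real d / \<beta> \<in> ppts \<beta>"
  unfolding ppts_def by blast

lemma Gset_notp: "x \<in> Gset \<beta> \<Longrightarrow> x \<notin> ppts \<beta>"
  unfolding Gset_def by (metis (mono_tags, lifting) funpow_0 mem_Collect_eq)

lemma Gset_interior:
  assumes b: "\<beta> > 1" and x: "x \<in> Gset \<beta>"
  shows "0 < x" "x < 1" "\<And>i::int. \<beta>*x \<noteq> of_int i" "0 \<le> \<lfloor>\<beta>*x\<rfloor>" "\<lfloor>\<beta>*x\<rfloor> \<le> int (bnum \<beta>)"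
proof -
  have x01: "x \<in> {0..1}" using x unfolding Gset_def by auto
  have np: "x \<notin> ppts \<beta>" using Gset_notp[OF x] .
  show "0 < x" using x01 np zero_ppts[of \<beta>] by (cases "x = 0") auto
  show x1: "x < 1" using x01 np one_ppts[of \<beta>] by (cases "x = 1") auto
  show ni: "\<And>i::int. \<beta>*x \<noteq> of_int i"
  proof
    fix i :: int assume e: "\<beta>*x = of_int i"
    have "0 \<le> \<beta>*x" using x01 b by simp
    hence i0: "0 \<le> i" using e by simp
    have "\<beta>*x < \<beta>" using x1 b by simp
    hence "of_int i < \<beta>" using e by simp
    hence "i \<le> \<lceil>\<beta>\<rceil> - 1"
    proof -
      assume "of_int i < \<beta>"
      hence "real_of_int i < real_of_int \<lceil>\<beta>\<rceil>" using le_of_int_ceiling[of \<beta>] by linarith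
      thus ?thesis by simp
    qed
    hence "nat i \<le> bnum \<beta>" using bnum_eq(1)[OF b] by linarith
    moreover have "x = real (nat i) / \<beta>" using e b i0 by (simp add: field_simps)
    ultimately have "x \<in> ppts \<beta>" using d_ppts by metis
    thus False using np by simp
  qed
  show "0 \<le> \<lfloor>\<beta>*x\<rfloor>" using x01 b by simp
  have "\<beta>*x < \<beta>" using x1 b by simp
  hence "real_of_int \<lfloor>\<beta>*x\<rfloor> < \<beta>" by linarith
  hence "real_of_int \<lfloor>\<beta>*x\<rfloor> < real_of_int \<lceil>\<beta>\<rceil>" using le_of_int_ceiling[of \<beta>] by linarith
  thus "\<lfloor>\<beta>*x\<rfloor> \<le> int (bnum \<beta>)" using bnum_eq(1)[OF b] by simp
qed

lemma Tfull_Tgen: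
  assumes b: "\<beta> > 1" and "0 < x" "x < 1" "\<And>i::int. \<beta>*x \<noteq> of_int i"
  shows "Tfull \<beta> x = Tgen \<beta> x"
proof -
  have "x \<notin> {real i / \<beta> | i. 1 \<le> i \<and> i \<le> bnum \<beta>}"
  proof
    assume "x \<in> {real i / \<beta> | i. 1 \<le> i \<and> i \<le> bnum \<beta>}"
    then obtain i where "x = real i / \<beta>" by auto
    hence "\<beta>*x = of_int (int i)" using b by simp
    thus False using assms(4) by blast
  qed
  thus ?thesis using assms unfolding Tfull_def by auto
qed

lemma Tfull_one:
  assumes b: "\<beta> > 1"
  shows "Tfull \<beta> 1 = real (bnum \<beta>) + 1 - \<beta>"
proof -
  let ?b = "real (bnum \<beta>)"
  have ev: "eventually (\<lambda>x. ?b + 1 - \<beta>*x = Tgen \<beta> x) (at_left (1::real))"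
  proof -
    have "?b / \<beta> < 1" using bnum_eq[OF b] b by simp
    hence "eventually (\<lambda>x. x \<in> {?b / \<beta><..<1}) (at_left (1::real))"
      by (intro eventually_at_left_real) 
    then show ?thesis
    proof eventually_elim
      case (elim x)
      have "?b < \<beta>*x" using elim b by (simp add: field_simps)
      moreover have "\<beta>*x < \<beta>" using elim b by simp
      ultimately have "\<beta>*x < real (bnum \<beta>) + 1" using bnum_eq[OF b] by linarith
      hence "\<lfloor>\<beta>*x\<rfloor> = int (bnum \<beta>)" using \<open>?b < \<beta>*x\<close>
        by (intro floor_unique) auto
      thus ?case by (simp add: Tgen_eq)
    qed
  qed
  have "((\<lambda>x. ?b + 1 - \<beta>*x) \<longlongrightarrow> ?b + 1 - \<beta>*1) (at_left (1::real))"
    by (intro tendsto_intros)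
  hence "(Tgen \<beta> \<longlongrightarrow> ?b + 1 - \<beta>) (at_left (1::real))"
    using ev by (simp add: tendsto_cong)
  hence "Lim (at_left 1) (Tgen \<beta>) = ?b + 1 - \<beta>"
    by (intro tendsto_Lim) (simp_all add: trivial_limit_at_left_real)
  thus ?thesis unfolding Tfull_def by simp
qed

lemma Tfull_range:
  assumes b: "\<beta> > 1"
  shows "0 \<le> Tfull \<beta> x \<and> Tfull \<beta> x \<le> 1"
proof -
  have "0 \<le> real (bnum \<beta>) + 1 - \<beta>" "real (bnum \<beta>) + 1 - \<beta> \<le> 1" using bnum_eq[OF b] by auto
  hence "x = 1 \<Longrightarrow> ?thesis" using Tfull_one[OF b] by simp
  moreover have "x \<noteq> 1 \<Longrightarrow> ?thesis" unfolding Tfull_def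
    using Tgen_pos[of \<beta> x] Tgen_le1[of \<beta> x] by auto
  ultimately show ?thesis by blast
qed

definition Oset :: "real \<Rightarrow> real set" where
  "Oset \<beta> = {0,1} \<union> range (\<lambda>k. (Tfull \<beta> ^^ k) 1)"

lemma Oset_range: "\<beta> > 1 \<Longrightarrow> q \<in> Oset \<beta> \<Longrightarrow> 0 \<le> q \<and> q \<le> 1"
proof -
  assume b: "\<beta> > 1" and q: "q \<in> Oset \<beta>"
  { fix k have "0 \<le> (Tfull \<beta> ^^ k) 1 \<and> (Tfull \<beta> ^^ k) 1 \<le> 1"
      using Tfull_range[OF b] by (cases k) auto }
  thus ?thesis using q unfolding Oset_def by auto
qed

lemma O_step:
  assumes b: "\<beta> > 1" and q: "q \<in> Oset \<beta>" and l: "of_int a \<le> \<beta>*q" and u: "\<beta>*q \<le> of_int a + 1"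
  shows "of_int a + 1 - \<beta>*q \<in> Oset \<beta>"
proof (cases "\<beta>*q = of_int a \<or> \<beta>*q = of_int a + 1")
  case True thus ?thesis unfolding Oset_def by auto
next
  case False
  hence l': "of_int a < \<beta>*q" and u': "\<beta>*q < of_int a + 1" using l u by auto
  have ni: "\<And>i::int. \<beta>*q \<noteq> of_int i"
  proof
    fix i :: int assume "\<beta>*q = of_int i"
    hence "a < i" "i < a + 1" using l' u' by (metis of_int_less_iff of_int_1 of_int_add)+
    thus False by simp
  qed
  have fl: "\<lfloor>\<beta>*q\<rfloor> = a" using l' u' by (intro floor_unique) auto
  show ?thesis
  proof (cases "q = 1")
    case True
    have "a < \<beta>" "\<beta> < a + 1" using l' u' True by auto
    hence "real_of_int a < real_of_int (int (bnum \<beta>) + 1)" "real_of_int (int (bnum \<beta>)) < real_of_int (a + 1)"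
      using bnum_eq[OF b] by auto
    hence "a < int (bnum \<beta>) + 1" "int (bnum \<beta>) < a + 1" by (simp only: of_int_less_iff)+
    hence "a = int (bnum \<beta>)" by simp
    hence "of_int a + 1 - \<beta>*q = (Tfull \<beta> ^^ 1) 1" using Tfull_one[OF b] True by simp
    thus ?thesis unfolding Oset_def by blast
  next
    case q1: False
    have q0: "q \<noteq> 0" using ni[of 0] by auto
    then obtain k where k: "q = (Tfull \<beta> ^^ k) 1" using q q1 unfolding Oset_def by auto
    have "0 < q" "q < 1" using Oset_range[OF b q] q0 q1 by auto
    hence "Tfull \<beta> q = Tgen \<beta> q" using Tfull_Tgen[OF b _ _ ni] by blast
    also have "\<dots> = of_int a + 1 - \<beta>*q" using Tgen_eq[OF fl] .
    finally have "of_int a + 1 - \<beta>*q = (Tfull \<beta> ^^ Suc k) 1" using k by simp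
    thus ?thesis unfolding Oset_def by blast
  qed
qed




definition Cset :: "real \<Rightarrow> (nat \<Rightarrow> int) \<Rightarrow> nat \<Rightarrow> real set" where
  "Cset \<beta> a j = {z \<in> {0..1}. \<forall>m<j. \<lfloor>\<beta> * (Tgen \<beta> ^^ m) z\<rfloor> = a m}"

lemma Cset_Suc: "Cset \<beta> a (Suc j) = {z \<in> Cset \<beta> a j. \<lfloor>\<beta> * (Tgen \<beta> ^^ j) z\<rfloor> = a j}"
  unfolding Cset_def by (auto simp: less_Suc_eq)

lemma Cset_inv:
  assumes b: "\<beta> > 1"
  shows "Cset \<beta> a j \<noteq> {} \<Longrightarrow> \<exists>A \<sigma> lo hi. (\<sigma> = 1 \<or> \<sigma> = -1) \<and>
      (\<forall>z\<in>Cset \<beta> a j. (Tgen \<beta> ^^ j) z = A + \<sigma>*\<beta>^j*z) \<and> lo \<in> Oset \<beta> \<and> hi \<in> Oset \<beta> \<and>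
      {lo<..<hi} \<subseteq> (Tgen \<beta> ^^ j) ` Cset \<beta> a j \<and> (Tgen \<beta> ^^ j) ` Cset \<beta> a j \<subseteq> {lo..hi}"
proof (induction j)
  case 0
  have "Cset \<beta> a 0 = {0..1}" unfolding Cset_def by auto
  have i: "(Tgen \<beta> ^^ 0) ` Cset \<beta> a 0 = {0..1}" using \<open>Cset \<beta> a 0 = {0..1}\<close> by simp
  have "(\<forall>z\<in>Cset \<beta> a 0. (Tgen \<beta> ^^ 0) z = 0 + 1*\<beta>^0*z)" by simp
  moreover have "(0::real) \<in> Oset \<beta>" "(1::real) \<in> Oset \<beta>" by (simp_all add: Oset_def)
  moreover have "{0<..<1::real} \<subseteq> (Tgen \<beta> ^^ 0) ` Cset \<beta> a 0" "(Tgen \<beta> ^^ 0) ` Cset \<beta> a 0 \<subseteq> {0..1::real}"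
    unfolding i by auto
  ultimately have H: "((1::real) = 1 \<or> (1::real) = -1) \<and>
      (\<forall>z\<in>Cset \<beta> a 0. (Tgen \<beta> ^^ 0) z = 0 + 1*\<beta>^0*z) \<and> (0::real) \<in> Oset \<beta> \<and> (1::real) \<in> Oset \<beta> \<and>
      {0<..<1::real} \<subseteq> (Tgen \<beta> ^^ 0) ` Cset \<beta> a 0 \<and> (Tgen \<beta> ^^ 0) ` Cset \<beta> a 0 \<subseteq> {0..1::real}" by simp
  show ?case by (rule exI, rule exI, rule exI, rule exI, rule H)
next
  case (Suc j)
  let ?T = "Tgen \<beta>"
  let ?C = "Cset \<beta> a j"
  have ne: "?C \<noteq> {}" using Suc.prems Cset_Suc[of \<beta> a j] by auto
  obtain A \<sigma> lo hi where s: "\<sigma> = 1 \<or> \<sigma> = -1" and aff: "\<forall>z\<in>?C. (?T ^^ j) z = A + \<sigma>*\<beta>^j*z"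
    and lo: "lo \<in> Oset \<beta>" and hi: "hi \<in> Oset \<beta>" and inn: "{lo<..<hi} \<subseteq> (?T ^^ j) ` ?C"
    and out: "(?T ^^ j) ` ?C \<subseteq> {lo..hi}"
    using Suc.IH[OF ne] by blast
  define \<alpha> where "\<alpha> = real_of_int (a j)"
  define L2 where "L2 = max (\<beta>*lo) \<alpha>"
  define H2 where "H2 = min (\<beta>*hi) (\<alpha>+1)"
  have bp: "\<beta> > 0" using b by simp
  obtain x0 where x0: "x0 \<in> Cset \<beta> a (Suc j)" using Suc.prems by auto
  define q0 where "q0 = (?T ^^ j) x0"
  have x0C: "x0 \<in> ?C" and fl0: "\<lfloor>\<beta>*q0\<rfloor> = a j" using x0 Cset_Suc[of \<beta> a j] q0_def by auto
  have q0lh: "lo \<le> q0" "q0 \<le> hi" using out x0C q0_def by auto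
  have q0a: "\<alpha> \<le> \<beta>*q0" "\<beta>*q0 < \<alpha> + 1" using fl0 unfolding \<alpha>_def by linarith+
  have lo': "\<alpha> + 1 - H2 \<in> Oset \<beta>"
  proof (cases "\<beta>*hi \<le> \<alpha>+1")
    case True
    hence "H2 = \<beta>*hi" unfolding H2_def by simp
    moreover have "\<beta>*q0 \<le> \<beta>*hi" using q0lh bp by simp
    hence "\<alpha> \<le> \<beta>*hi" using q0a by linarith
    ultimately show ?thesis using O_step[OF b hi, of "a j"] True unfolding \<alpha>_def by simp
  next
    case False
    hence "H2 = \<alpha>+1" unfolding H2_def by simp
    thus ?thesis by (simp add: Oset_def)
  qed
  have hi': "\<alpha> + 1 - L2 \<in> Oset \<beta>"
  proof (cases "\<alpha> \<le> \<beta>*lo")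
    case True
    hence "L2 = \<beta>*lo" unfolding L2_def by simp
    moreover have "\<beta>*lo \<le> \<beta>*q0" using q0lh bp by simp
    hence "\<beta>*lo \<le> \<alpha> + 1" using q0a by linarith
    ultimately show ?thesis using O_step[OF b lo, of "a j"] True unfolding \<alpha>_def by simp
  next
    case False
    hence "L2 = \<alpha>" unfolding L2_def by simp
    thus ?thesis by (simp add: Oset_def)
  qed
  have aff': "\<forall>z\<in>Cset \<beta> a (Suc j). (?T ^^ Suc j) z = (\<alpha>+1-\<beta>*A) + (-\<sigma>)*\<beta>^Suc j*z"
  proof
    fix z assume z: "z \<in> Cset \<beta> a (Suc j)"
    hence zC: "z \<in> ?C" and fz: "\<lfloor>\<beta>*(?T ^^ j) z\<rfloor> = a j" using Cset_Suc[of \<beta> a j] by auto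
    have "(?T ^^ Suc j) z = ?T ((?T ^^ j) z)" by simp
    also have "\<dots> = \<alpha> + 1 - \<beta> * (?T ^^ j) z" using Tgen_eq[OF fz] \<alpha>_def by simp
    also have "\<dots> = (\<alpha>+1-\<beta>*A) + (-\<sigma>)*\<beta>^Suc j*z" using aff zC by (simp add: algebra_simps)
    finally show "(?T ^^ Suc j) z = (\<alpha>+1-\<beta>*A) + (-\<sigma>)*\<beta>^Suc j*z" .
  qed
  have inn': "{\<alpha>+1-H2<..<\<alpha>+1-L2} \<subseteq> (?T ^^ Suc j) ` Cset \<beta> a (Suc j)"
  proof
    fix t assume t: "t \<in> {\<alpha>+1-H2<..<\<alpha>+1-L2}"
    define q where "q = (\<alpha>+1-t)/\<beta>"
    have bq: "\<beta>*q = \<alpha>+1-t" unfolding q_def using bp by simp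
    have "L2 < \<beta>*q" "\<beta>*q < H2" using t bq by auto
    hence "\<beta>*lo < \<beta>*q" "\<beta>*q < \<beta>*hi" "\<alpha> < \<beta>*q" "\<beta>*q < \<alpha>+1" unfolding L2_def H2_def by auto
    hence "lo < q" "q < hi" using bp by auto
    have fq: "\<lfloor>\<beta>*q\<rfloor> = a j" unfolding \<alpha>_def using \<open>\<alpha> < \<beta>*q\<close> \<open>\<beta>*q < \<alpha>+1\<close> unfolding \<alpha>_def
      by (intro floor_unique) auto
    obtain z where zC: "z \<in> ?C" and zq: "q = (?T ^^ j) z" using inn \<open>lo < q\<close> \<open>q < hi\<close> by (meson greaterThanLessThan_iff image_iff subsetD)
    have "z \<in> Cset \<beta> a (Suc j)" using zC fq zq Cset_Suc[of \<beta> a j] by auto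
    moreover have "(?T ^^ Suc j) z = t" using Tgen_eq[OF fq] zq bq \<alpha>_def by simp
    ultimately show "t \<in> (?T ^^ Suc j) ` Cset \<beta> a (Suc j)" by blast
  qed
  have out': "(?T ^^ Suc j) ` Cset \<beta> a (Suc j) \<subseteq> {\<alpha>+1-H2..\<alpha>+1-L2}"
  proof
    fix t assume "t \<in> (?T ^^ Suc j) ` Cset \<beta> a (Suc j)"
    then obtain z where z: "z \<in> Cset \<beta> a (Suc j)" and tz: "t = (?T ^^ Suc j) z" by auto
    hence zC: "z \<in> ?C" and fz: "\<lfloor>\<beta>*(?T ^^ j) z\<rfloor> = a j" using Cset_Suc[of \<beta> a j] by auto
    define q where "q = (?T ^^ j) z"
    have "lo \<le> q" "q \<le> hi" using out zC q_def by auto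
    hence "\<beta>*lo \<le> \<beta>*q" "\<beta>*q \<le> \<beta>*hi" using bp by auto
    moreover have "\<alpha> \<le> \<beta>*q" "\<beta>*q \<le> \<alpha>+1" using fz unfolding q_def \<alpha>_def by linarith+
    ultimately have "L2 \<le> \<beta>*q" "\<beta>*q \<le> H2" unfolding L2_def H2_def by auto
    moreover have "t = \<alpha> + 1 - \<beta>*q" using Tgen_eq[OF fz] tz q_def \<alpha>_def by simp
    ultimately show "t \<in> {\<alpha>+1-H2..\<alpha>+1-L2}" by auto
  qed
  have s': "-\<sigma> = 1 \<or> -\<sigma> = -1" using s by auto
  have H: "(-\<sigma> = 1 \<or> -\<sigma> = -1) \<and> (\<forall>z\<in>Cset \<beta> a (Suc j). (?T ^^ Suc j) z = (\<alpha>+1-\<beta>*A) + (-\<sigma>)*\<beta>^Suc j*z)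
     \<and> \<alpha> + 1 - H2 \<in> Oset \<beta> \<and> \<alpha> + 1 - L2 \<in> Oset \<beta> \<and> {\<alpha>+1-H2<..<\<alpha>+1-L2} \<subseteq> (?T ^^ Suc j) ` Cset \<beta> a (Suc j)
     \<and> (?T ^^ Suc j) ` Cset \<beta> a (Suc j) \<subseteq> {\<alpha>+1-H2..\<alpha>+1-L2}"
    using s' aff' lo' hi' inn' out' by (intro conjI)
  show ?case by (rule exI, rule exI, rule exI, rule exI, rule H)
qed




lemma Oset_finite:
  assumes b: "\<beta> > 1" and y: "yrrap \<beta>"
  shows "finite (Oset \<beta>)"
proof -
  obtain m p where p: "p > 0" and per: "(Tfull \<beta> ^^ (m + p)) 1 = (Tfull \<beta> ^^ m) 1"
    using y unfolding yrrap_def by blast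
  have key: "\<exists>k'<m+p. (Tfull \<beta> ^^ k) 1 = (Tfull \<beta> ^^ k') 1" for k
  proof (induction k rule: less_induct)
    case (less k)
    show ?case
    proof (cases "k < m + p")
      case True thus ?thesis by blast
    next
      case False
      have "(Tfull \<beta> ^^ k) 1 = (Tfull \<beta> ^^ ((k-m-p) + (m+p))) 1" using False by simp
      also have "\<dots> = (Tfull \<beta> ^^ (k-m-p)) ((Tfull \<beta> ^^ (m+p)) 1)"
        by (simp only: funpow_add o_apply)
      also have "\<dots> = (Tfull \<beta> ^^ (k-m-p)) ((Tfull \<beta> ^^ m) 1)" using per by simp
      also have "\<dots> = (Tfull \<beta> ^^ ((k-m-p) + m)) 1"
        by (simp only: funpow_add o_apply)
      also have "\<dots> = (Tfull \<beta> ^^ (k-p)) 1" using False by (simp add: algebra_simps)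
      finally show ?thesis using less.IH[of "k-p"] p False by fastforce
    qed
  qed
  have "range (\<lambda>k. (Tfull \<beta> ^^ k) 1) \<subseteq> (\<lambda>k. (Tfull \<beta> ^^ k) 1) ` {..<m+p}"
    using key by blast
  hence "finite (range (\<lambda>k. (Tfull \<beta> ^^ k) 1))" using finite_surj by blast
  thus ?thesis unfolding Oset_def by simp
qed

lemma ppts_finite: "finite (ppts \<beta>)"
proof -
  have "{real i / \<beta> | i. i \<le> bnum \<beta>} = (\<lambda>i. real i / \<beta>) ` {..bnum \<beta>}" by auto
  thus ?thesis unfolding ppts_def by simp
qed

definition dl :: "real \<Rightarrow> real" where
  "dl \<beta> = Min (insert 1 ((\<lambda>(o', q). \<bar>o' - q\<bar>) ` {(o', q). o' \<in> Oset \<beta> \<and> q \<in> ppts \<beta> \<and> o' \<noteq> q}))"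

lemma dl_props:
  assumes b: "\<beta> > 1" and y: "yrrap \<beta>"
  shows "dl \<beta> > 0" "\<And>o' q. o' \<in> Oset \<beta> \<Longrightarrow> q \<in> ppts \<beta> \<Longrightarrow> o' \<noteq> q \<Longrightarrow> dl \<beta> \<le> \<bar>o' - q\<bar>"
proof -
  let ?P = "{(o', q). o' \<in> Oset \<beta> \<and> q \<in> ppts \<beta> \<and> o' \<noteq> q}"
  have "?P \<subseteq> Oset \<beta> \<times> ppts \<beta>" by auto
  hence fP: "finite ?P" using Oset_finite[OF b y] ppts_finite finite_subset by blast
  hence f: "finite (insert 1 ((\<lambda>(o', q). \<bar>o' - q\<bar>) ` ?P))" by simp
  have "\<forall>x \<in> insert 1 ((\<lambda>(o', q). \<bar>o' - q\<bar>) ` ?P). x > (0::real)" by auto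
  thus "dl \<beta> > 0" unfolding dl_def using f by (subst Min_gr_iff) auto
  fix o' q assume "o' \<in> Oset \<beta>" "q \<in> ppts \<beta>" "o' \<noteq> q"
  hence "\<bar>o' - q\<bar> \<in> insert 1 ((\<lambda>(o', q). \<bar>o' - q\<bar>) ` ?P)" by force
  thus "dl \<beta> \<le> \<bar>o' - q\<bar>" unfolding dl_def using f by (rule Min_le[rotated])
qed

lemma open_coords: "open {t::nat \<Rightarrow> nat. \<forall>j<n. t (k + j) = u j}"
proof -
  have e: "{t::nat \<Rightarrow> nat. \<forall>j<n. t (k + j) = u j} = (\<Inter>j\<in>{..<n}. (\<lambda>t. t (k + j)) -` {u j})"
    by auto
  have "open ((\<lambda>t::nat\<Rightarrow>nat. t (k + j)) -` {u j})" for j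
    by (rule continuous_imp_open_vimage[of UNIV]) (auto simp: open_discrete)
  thus ?thesis unfolding e by (intro open_INT) auto
qed

lemma lang_point:
  assumes b: "\<beta> > 1" and u: "u \<in> lang \<beta>"
  shows "\<exists>y\<in>Gset \<beta>. \<forall>j<length u. idig \<beta> y j = u ! j"
proof -
  obtain s k where s: "s \<in> Sigma_mb \<beta>" and sk: "\<forall>j<length u. s (k + j) = u ! j"
    using u unfolding lang_def by blast
  let ?U = "{t::nat \<Rightarrow> nat. \<forall>j<length u. t (k + j) = u ! j}"
  have "open ?U" by (rule open_coords)
  moreover have "s \<in> ?U" using sk by simp
  ultimately have "?U \<inter> idig \<beta> ` Gset \<beta> \<noteq> {}"
    using s open_Int_closure_eq_empty[of ?U "idig \<beta> ` Gset \<beta>"] unfolding Sigma_mb_def by blast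
  then obtain x where x: "x \<in> Gset \<beta>" and xu: "\<forall>j<length u. idig \<beta> x (k + j) = u ! j" by auto
  define y where "y = (Tgen \<beta> ^^ k) x"
  have "y \<in> Gset \<beta>" unfolding y_def using Gset_iter[OF x] .
  moreover have iy: "idig \<beta> y j = idig \<beta> x (k + j)" for j
  proof -
    have "(Tgen \<beta> ^^ (j + k)) x = (Tgen \<beta> ^^ j) ((Tgen \<beta> ^^ k) x)" by (simp only: funpow_add o_apply)
    thus ?thesis unfolding idig_def y_def by (simp add: add.commute)
  qed
  moreover have "\<forall>j<length u. idig \<beta> y j = u ! j" using xu by (simp add: iy)
  ultimately show ?thesis by blast
qed

lemma Tfull_iter_Gset:
  assumes b: "\<beta> > 1" and x: "x \<in> Gset \<beta>"
  shows "(Tfull \<beta> ^^ k) x = (Tgen \<beta> ^^ k) x"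
proof (induction k)
  case 0 thus ?case by simp
next
  case (Suc k)
  have g: "(Tgen \<beta> ^^ k) x \<in> Gset \<beta>" using Gset_iter[OF x] .
  show ?case using Suc Tfull_Tgen[OF b Gset_interior(1,2,3)[OF b g]] by simp
qed

lemma Phi_Gset:
  assumes b: "\<beta> > 1" and x: "x \<in> Gset \<beta>"
  shows "Phi \<beta> x = idig \<beta> x"
proof
  fix k
  define q where "q = (Tgen \<beta> ^^ k) x"
  have g: "q \<in> Gset \<beta>" unfolding q_def using Gset_iter[OF x] .
  note gi = Gset_interior[OF b g]
  define a where "a = nat \<lfloor>\<beta>*q\<rfloor>"
  have ia: "int a = \<lfloor>\<beta>*q\<rfloor>" unfolding a_def using gi(4) by simp
  have ab: "a \<le> bnum \<beta>" using gi(5) ia by simp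
  have l: "real a < \<beta>*q"
  proof -
    have "real a \<le> \<beta>*q" using ia by (metis of_int_floor_le of_int_of_nat_eq)
    moreover have "real a \<noteq> \<beta>*q" using gi(3)[of "int a"] by simp
    ultimately show ?thesis by simp
  qed
  have u: "\<beta>*q < real a + 1" using ia by (metis of_int_of_nat_eq real_of_int_floor_add_one_gt)
  have bp: "\<beta> > 0" using b by simp
  have bb: "\<beta> \<le> real (bnum \<beta>) + 1" "bnum \<beta> \<ge> 1" using bnum_eq[OF b] by auto
  have mem: "q \<in> Jset \<beta> j \<longleftrightarrow> j = a" if j: "j \<le> bnum \<beta>" for j
  proof
    assume qj: "q \<in> Jset \<beta> j"
    have "real j \<le> \<beta>*q \<and> \<beta>*q \<le> real j + 1"
    proof -
      have "real j / \<beta> \<le> q \<and> q \<le> (real j + 1) / \<beta>"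
      proof -
        have "(real (bnum \<beta>) + 1)/\<beta> \<ge> 1" using bb bp by simp
        thus ?thesis using qj j unfolding Jset_def
          by (auto split: if_splits)
      qed
      thus ?thesis using bp by (simp add: field_simps)
    qed
    hence "real j < \<beta>*q" "\<beta>*q < real j + 1"
      using gi(3)[of "int j"] gi(3)[of "int j + 1"] by auto
    hence "\<lfloor>\<beta>*q\<rfloor> = int j" by (intro floor_unique) auto
    thus "j = a" using ia by simp
  next
    assume "j = a"
    have q1: "q < 1" using gi(2) .
    have "real a / \<beta> < q" "q < (real a + 1)/\<beta>" using l u bp by (simp_all add: field_simps)
    moreover have "a < bnum \<beta> \<or> a = bnum \<beta>" using ab by auto
    ultimately show "q \<in> Jset \<beta> j" using \<open>j = a\<close> q1 gi(1) unfolding Jset_def by auto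
  qed
  have "Phi \<beta> x k = (THE j. j \<le> bnum \<beta> \<and> q \<in> Jset \<beta> j)"
    unfolding Phi_def q_def Tfull_iter_Gset[OF b x] ..
  also have "\<dots> = a" using mem ab by (intro the_equality) auto
  finally show "Phi \<beta> x k = idig \<beta> x k" unfolding idig_def a_def q_def by simp
qed




lemma Tgen_preimage_countable:
  assumes b: "\<beta> > 1" and P: "countable P"
  shows "countable {x. Tgen \<beta> x \<in> P}"
proof -
  have "{x. Tgen \<beta> x \<in> P} \<subseteq> (\<lambda>(m,p). (real_of_int m + 1 - p)/\<beta>) ` (UNIV \<times> P)"
  proof
    fix x assume "x \<in> {x. Tgen \<beta> x \<in> P}"
    hence xP: "Tgen \<beta> x \<in> P" by simp
    have e: "x = (real_of_int \<lfloor>\<beta>*x\<rfloor> + 1 - Tgen \<beta> x)/\<beta>" using b unfolding Tgen_def by simp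
    show "x \<in> (\<lambda>(m,p). (real_of_int m + 1 - p)/\<beta>) ` (UNIV \<times> P)"
    proof (rule image_eqI[of _ _ "(\<lfloor>\<beta>*x\<rfloor>, Tgen \<beta> x)"])
      show "x = (case (\<lfloor>\<beta>*x\<rfloor>, Tgen \<beta> x) of (m,p) \<Rightarrow> (real_of_int m + 1 - p)/\<beta>)" using e by simp
      show "(\<lfloor>\<beta>*x\<rfloor>, Tgen \<beta> x) \<in> UNIV \<times> P" using xP by simp
    qed
  qed
  moreover have "countable ((UNIV::int set) \<times> P)" using P by (intro countable_SIGMA) auto
  ultimately show ?thesis by (metis countable_image countable_subset)
qed

lemma iter_preimage_countable:
  assumes b: "\<beta> > 1" and P: "countable P"
  shows "countable {x. (Tgen \<beta> ^^ k) x \<in> P}"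
proof (induction k)
  case 0 thus ?case using P by simp
next
  case (Suc k)
  have "{x. (Tgen \<beta> ^^ Suc k) x \<in> P} = {x. Tgen \<beta> x \<in> {y. (Tgen \<beta> ^^ k) y \<in> P}}"
    by (simp add: funpow_Suc_right del: funpow.simps)
  thus ?case using Tgen_preimage_countable[OF b Suc] by simp
qed

lemma NG_countable:
  assumes b: "\<beta> > 1"
  shows "countable ({0..1} - Gset \<beta>)"
proof -
  have "{0..1} - Gset \<beta> \<subseteq> (\<Union>k. {x. (Tgen \<beta> ^^ k) x \<in> ppts \<beta>})" unfolding Gset_def by blast
  moreover have "countable (\<Union>k. {x. (Tgen \<beta> ^^ k) x \<in> ppts \<beta>})"
    using iter_preimage_countable[OF b countable_finite[OF ppts_finite]] by (intro countable_UN) auto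
  ultimately show ?thesis by (rule countable_subset)
qed

lemma Tgen_meas: "Tgen \<beta> \<in> borel_measurable borel"
proof -
  have "(\<lambda>x. real_of_int \<lfloor>\<beta>*x\<rfloor> + 1 - \<beta>*x) \<in> borel_measurable borel"
    using borel_measurable_real_floor by (intro borel_measurable_add borel_measurable_diff measurable_compose[OF _ borel_measurable_real_floor]) auto
  thus ?thesis unfolding Tgen_def[abs_def] .
qed

lemma iter_meas: "(Tgen \<beta> ^^ k) \<in> borel_measurable borel"
proof (induction k)
  case 0 thus ?case by simp
next
  case (Suc k)
  have "Tgen \<beta> \<circ> (Tgen \<beta> ^^ k) \<in> borel_measurable borel" by (rule measurable_comp[OF Suc Tgen_meas])
  thus ?case by (simp add: comp_def)
qed

lemma idig_meas_gen: fixes f :: "real \<Rightarrow> real" assumes "f \<in> borel_measurable borel"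
  shows "(\<lambda>x. nat \<lfloor>\<beta> * f x\<rfloor>) \<in> measurable borel (count_space UNIV)"
proof -
  have "(\<lambda>x. \<beta> * f x) \<in> borel_measurable borel" by (intro borel_measurable_times borel_measurable_const assms)
  hence "(\<lambda>x. \<lfloor>\<beta> * f x\<rfloor>) \<in> measurable borel (count_space UNIV)"
    by (rule measurable_compose[OF _ measurable_real_floor])
  thus ?thesis by (rule measurable_compose[OF _ measurable_count_space])
qed

lemma idig_meas: "(\<lambda>x. idig \<beta> x j) \<in> measurable borel (count_space UNIV)"
  unfolding idig_def using idig_meas_gen[OF iter_meas[where \<beta>=\<beta> and k=j]] .

lemma prefix_sets: "(\<And>j. (\<lambda>x. g x j) \<in> measurable borel (count_space UNIV)) \<Longrightarrow> {x \<in> space borel. \<forall>j<n. g x j = (w::nat list) ! j} \<in> sets borel"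
proof -
  assume a: "\<And>j. (\<lambda>x. g x j) \<in> measurable borel (count_space UNIV)"
  have e: "{x \<in> space borel. \<forall>j<n. g x j = w ! j} = {x \<in> space borel. \<forall>j\<in>{..<n}. g x j = w ! j}" by auto
  have "{x \<in> space borel. g x j = w ! j} \<in> sets borel" for j
  proof -
    have "{x \<in> space borel. g x j = w ! j} = (\<lambda>x. g x j) -` {w ! j} \<inter> space borel" by auto
    thus ?thesis using measurable_sets[OF a] by simp
  qed
  thus ?thesis unfolding e by (intro sets.sets_Collect_finite_All) auto
qed

lemma S_sets:
  assumes b: "\<beta> > 1"
  shows "{x \<in> {0..1}. Phi \<beta> x \<in> cyl \<beta> w} \<in> sets lborel"
proof -
  define S where "S = {x \<in> {0..1}. Phi \<beta> x \<in> cyl \<beta> w}"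
  define N where "N = {0..1} - Gset \<beta>"
  define I where "I = {x \<in> space borel. \<forall>j<length w. idig \<beta> x j = w ! j}"
  have Nn: "N \<in> null_sets lborel" unfolding N_def using countable_imp_null_set_lborel[OF NG_countable[OF b]] .
  have G: "Gset \<beta> = {0..1} - N" unfolding Gset_def N_def by blast
  have "{0..1::real} \<in> sets lborel" by simp
  hence Gs: "Gset \<beta> \<in> sets lborel" unfolding G using null_setsD2[OF Nn] by (rule sets.Diff)
  have Is: "I \<in> sets lborel" unfolding I_def sets_lborel using prefix_sets[OF idig_meas] .
  have mem: "Phi \<beta> x \<in> cyl \<beta> w \<longleftrightarrow> x \<in> I" if x: "x \<in> Gset \<beta>" for x
  proof -
    have "idig \<beta> x \<in> Sigma_mb \<beta>" unfolding Sigma_mb_def using x closure_subset[of "idig \<beta> ` Gset \<beta>"] by blast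
    hence "Phi \<beta> x \<in> cyl \<beta> w \<longleftrightarrow> (\<forall>j<length w. idig \<beta> x j = w ! j)"
      unfolding Phi_Gset[OF b x] cyl_def by blast
    also have "\<dots> \<longleftrightarrow> x \<in> I" unfolding I_def by simp
    finally show ?thesis .
  qed
  have eq: "S \<inter> Gset \<beta> = Gset \<beta> \<inter> I"
  proof (intro set_eqI iffI)
    fix x assume "x \<in> S \<inter> Gset \<beta>" thus "x \<in> Gset \<beta> \<inter> I" using mem unfolding S_def by blast
  next
    fix x assume x: "x \<in> Gset \<beta> \<inter> I"
    hence "x \<in> {0..1}" unfolding Gset_def by blast
    thus "x \<in> S \<inter> Gset \<beta>" using mem x unfolding S_def by blast
  qed
  have "S - Gset \<beta> \<subseteq> N" unfolding S_def N_def by blast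
  hence "countable (S - Gset \<beta>)" using NG_countable[OF b] unfolding N_def by (rule countable_subset)
  hence "S - Gset \<beta> \<in> null_sets lborel" by (rule countable_imp_null_set_lborel)
  hence A: "S - Gset \<beta> \<in> sets lborel" by (rule null_setsD2)
  have B: "S \<inter> Gset \<beta> \<in> sets lborel" unfolding eq using Gs Is by (rule sets.Int)
  have "S = (S \<inter> Gset \<beta>) \<union> (S - Gset \<beta>)" by blast
  also have "\<dots> \<in> sets lborel" using B A by (rule sets.Un)
  finally show ?thesis unfolding S_def .
qed




lemma idig_floor:
  assumes b: "\<beta> > 1" and x: "x \<in> Gset \<beta>"
  shows "int (idig \<beta> x m) = \<lfloor>\<beta> * (Tgen \<beta> ^^ m) x\<rfloor>"
  using Gset_interior(4)[OF b Gset_iter[OF x]] unfolding idig_def by simp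

lemma interval_measure:
  assumes bp: "B > 0" and s: "\<sigma> = 1 \<or> \<sigma> = -1" and lh: "lo \<le> hi"
  shows "measure lborel {z::real. lo < A + \<sigma>*B*z \<and> A + \<sigma>*B*z < hi} = (hi - lo)/B"
proof (cases "\<sigma> = 1")
  case True
  have "{z::real. lo < A + \<sigma>*B*z \<and> A + \<sigma>*B*z < hi} = {(lo-A)/B <..< (hi-A)/B}"
    using bp True by (auto simp: field_simps)
  moreover have "(lo-A)/B \<le> (hi-A)/B" using bp lh by (simp add: divide_right_mono)
  ultimately show ?thesis by (simp add: diff_divide_distrib)
next
  case False
  hence sm: "\<sigma> = -1" using s by simp
  have "{z::real. lo < A + \<sigma>*B*z \<and> A + \<sigma>*B*z < hi} = {(A-hi)/B <..< (A-lo)/B}"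
    using bp sm by (auto simp: field_simps)
  moreover have "(A-hi)/B \<le> (A-lo)/B" using bp lh by (simp add: divide_right_mono)
  ultimately show ?thesis by (simp add: diff_divide_distrib)
qed

lemma cyl_lower:
  assumes b: "\<beta> > 1" and yr: "yrrap \<beta>"
    and wc: "w @ v @ [c] \<in> lang \<beta>" and wd: "w @ v @ [d] \<in> lang \<beta>"
    and cd: "c < d" "d \<le> bnum \<beta>"
  shows "Lmb \<beta> w \<ge> dl \<beta> / \<beta> ^ (length w + length v)"
proof -
  define N where "N = length w + length v"
  define T where "T = Tgen \<beta>"
  obtain y1 where y1: "y1 \<in> Gset \<beta>" and y1d: "\<forall>j<length (w @ v @ [c]). idig \<beta> y1 j = (w @ v @ [c]) ! j"
    using lang_point[OF b wc] by blast
  obtain y2 where y2: "y2 \<in> Gset \<beta>" and y2d: "\<forall>j<length (w @ v @ [d]). idig \<beta> y2 j = (w @ v @ [d]) ! j"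
    using lang_point[OF b wd] by blast
  have y1m: "idig \<beta> y1 m = (w @ v) ! m" if "m < N" for m
    using y1d that unfolding N_def by (auto simp: nth_append)
  have y2m: "idig \<beta> y2 m = (w @ v) ! m" if "m < N" for m
    using y2d that unfolding N_def by (auto simp: nth_append)
  have y1N: "idig \<beta> y1 N = c" using y1d unfolding N_def by (auto simp: nth_append)
  have y2N: "idig \<beta> y2 N = d" using y2d unfolding N_def by (auto simp: nth_append)
  define a where "a = (\<lambda>m. \<lfloor>\<beta> * (T ^^ m) y1\<rfloor>)"
  have y101: "y1 \<in> {0..1}" "y2 \<in> {0..1}" using y1 y2 unfolding Gset_def by auto
  have y1C: "y1 \<in> Cset \<beta> a N" unfolding Cset_def a_def T_def using y101 by simp
  have y2C: "y2 \<in> Cset \<beta> a N"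
  proof -
    have "\<lfloor>\<beta> * (T ^^ m) y2\<rfloor> = a m" if m: "m < N" for m
    proof -
      have "\<lfloor>\<beta> * (T ^^ m) y2\<rfloor> = int (idig \<beta> y2 m)" unfolding T_def using idig_floor[OF b y2] by simp
      also have "\<dots> = int (idig \<beta> y1 m)" using y1m[OF m] y2m[OF m] by simp
      also have "\<dots> = a m" unfolding a_def T_def using idig_floor[OF b y1] by simp
      finally show ?thesis .
    qed
    thus ?thesis unfolding Cset_def T_def using y101 by simp
  qed
  hence ne: "Cset \<beta> a N \<noteq> {}" by blast
  obtain A \<sigma> lo hi where s: "\<sigma> = 1 \<or> \<sigma> = -1" and aff: "\<forall>z\<in>Cset \<beta> a N. (T ^^ N) z = A + \<sigma>*\<beta>^N*z"
    and lo: "lo \<in> Oset \<beta>" and hi: "hi \<in> Oset \<beta>" and inn: "{lo<..<hi} \<subseteq> (T ^^ N) ` Cset \<beta> a N"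
    and out: "(T ^^ N) ` Cset \<beta> a N \<subseteq> {lo..hi}"
    using Cset_inv[OF b ne] unfolding T_def by blast
  define p1 where "p1 = (T ^^ N) y1"
  define p2 where "p2 = (T ^^ N) y2"
  have p1lh: "lo \<le> p1" using out y1C unfolding p1_def by auto
  have p2lh: "p2 \<le> hi" using out y2C unfolding p2_def by auto
  have bp: "\<beta> > 0" using b by simp
  have fp1: "\<lfloor>\<beta> * p1\<rfloor> = int c" using idig_floor[OF b y1, of N] y1N unfolding p1_def T_def by simp
  have fp2: "\<lfloor>\<beta> * p2\<rfloor> = int d" using idig_floor[OF b y2, of N] y2N unfolding p2_def T_def by simp
  have "\<beta> * p1 < real c + 1" using fp1 by linarith
  hence "\<beta> * p1 < real d" using cd by linarith
  hence p1d: "p1 < real d / \<beta>" using bp by (simp add: field_simps)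
  have "real d \<le> \<beta> * p2" using fp2 by linarith
  hence "real d / \<beta> \<le> p2" using bp by (simp add: field_simps)
  moreover have dp: "real d / \<beta> \<in> ppts \<beta>" using d_ppts[OF cd(2)] .
  moreover have "p2 \<notin> ppts \<beta>" using Gset_notp[OF Gset_iter[OF y2, of N]] unfolding p2_def T_def .
  ultimately have p2d: "real d / \<beta> < p2" by (metis order.not_eq_order_implies_strict)
  have hid: "hi \<noteq> real d / \<beta>" using p2d p2lh by simp
  have "dl \<beta> \<le> \<bar>hi - real d / \<beta>\<bar>" using dl_props(2)[OF b yr hi dp hid] .
  also have "\<dots> = hi - real d / \<beta>" using p2d p2lh by simp
  also have "\<dots> \<le> hi - lo" using p1d p1lh by simp
  finally have dlh: "dl \<beta> \<le> hi - lo" .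
  have lh: "lo \<le> hi" using p1lh p1d p2d p2lh by simp
  define Z where "Z = {z::real. lo < A + \<sigma>*\<beta>^N*z \<and> A + \<sigma>*\<beta>^N*z < hi}"
  have bN: "\<beta>^N > 0" using bp by simp
  have ZC: "Z \<subseteq> Cset \<beta> a N"
  proof
    fix z assume z: "z \<in> Z"
    hence "A + \<sigma>*\<beta>^N*z \<in> {lo<..<hi}" unfolding Z_def by simp
    then obtain z' where z': "z' \<in> Cset \<beta> a N" and e: "A + \<sigma>*\<beta>^N*z = (T ^^ N) z'" using inn by blast
    hence "\<sigma>*\<beta>^N*z = \<sigma>*\<beta>^N*z'" using aff by simp
    moreover have "\<sigma>*\<beta>^N \<noteq> 0" using s bN bp by auto
    ultimately have "z = z'" by (metis mult_cancel_left)
    thus "z \<in> Cset \<beta> a N" using z' by simp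
  qed
  define S where "S = {x \<in> {0..1}. Phi \<beta> x \<in> cyl \<beta> w}"
  define NG where "NG = {0..1} - Gset \<beta>"
  have ZS: "Z - NG \<subseteq> S"
  proof
    fix z assume z: "z \<in> Z - NG"
    have zC: "z \<in> Cset \<beta> a N" using z ZC by blast
    hence z01: "z \<in> {0..1}" unfolding Cset_def by blast
    hence zG: "z \<in> Gset \<beta>" using z unfolding NG_def by blast
    have "idig \<beta> z \<in> Sigma_mb \<beta>" unfolding Sigma_mb_def using zG closure_subset[of "idig \<beta> ` Gset \<beta>"] by blast
    moreover have "idig \<beta> z j = w ! j" if j: "j < length w" for j
    proof -
      have jN: "j < N" using j unfolding N_def by simp
      have "int (idig \<beta> z j) = \<lfloor>\<beta> * (T ^^ j) z\<rfloor>" using idig_floor[OF b zG] unfolding T_def by simp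
      also have "\<dots> = a j" using zC jN unfolding Cset_def T_def by blast
      also have "\<dots> = int (idig \<beta> y1 j)" unfolding a_def T_def using idig_floor[OF b y1] by simp
      finally have "idig \<beta> z j = idig \<beta> y1 j" by simp
      also have "\<dots> = (w @ v) ! j" using y1m[OF jN] .
      also have "\<dots> = w ! j" using j by (simp add: nth_append)
      finally show ?thesis .
    qed
    ultimately have "idig \<beta> z \<in> cyl \<beta> w" unfolding cyl_def by blast
    hence "Phi \<beta> z \<in> cyl \<beta> w" using Phi_Gset[OF b zG] by simp
    thus "z \<in> S" unfolding S_def using z01 by blast
  qed
  have NGn: "NG \<in> null_sets lborel" unfolding NG_def using countable_imp_null_set_lborel[OF NG_countable[OF b]] .
  have Zs: "Z \<in> sets lborel"
  proof -
    have "Z = (\<lambda>z. A + \<sigma>*\<beta>^N*z) -` {lo<..<hi}" unfolding Z_def by auto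
    moreover have m: "(\<lambda>z::real. A + \<sigma>*\<beta>^N*z) \<in> borel_measurable borel" by measurable
    have "(\<lambda>z::real. A + \<sigma>*\<beta>^N*z) -` {lo<..<hi} \<inter> space borel \<in> sets borel"
      by (rule measurable_sets[OF m]) simp
    ultimately have "Z \<in> sets borel" by simp
    thus ?thesis by simp
  qed
  have Sf: "S \<in> fmeasurable lborel"
  proof (rule fmeasurableI2)
    show "cbox 0 (1::real) \<in> fmeasurable lborel" by (rule fmeasurable_cbox)
    show "S \<subseteq> cbox 0 1" unfolding S_def by auto
    show "S \<in> sets lborel" unfolding S_def by (rule S_sets[OF b])
  qed
  have "measure lborel (Z - NG) \<le> measure lborel S"
    using ZS _ Sf by (rule measure_mono_fmeasurable) (use Zs NGn in auto)
  moreover have "measure lborel (Z - NG) = measure lborel Z" using Zs NGn by (rule measure_Diff_null_set)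
  moreover have "measure lborel Z = (hi - lo)/\<beta>^N" unfolding Z_def using interval_measure[OF bN s lh] by simp
  ultimately have "(hi - lo)/\<beta>^N \<le> Lmb \<beta> w" unfolding Lmb_def S_def by simp
  moreover have "dl \<beta> / \<beta>^N \<le> (hi - lo)/\<beta>^N" using dlh bN by (simp add: divide_right_mono)
  ultimately show ?thesis unfolding N_def by simp
qed




lemma gw_attained:
  assumes "gw \<beta> w < \<infinity>"
  obtains i v c d where "ereal (real i) \<le> gw \<beta> w" "v \<in> langn \<beta> i" "c < d" "d \<le> bnum \<beta>"
            "w @ v @ [c] \<in> lang \<beta>" "w @ v @ [d] \<in> lang \<beta>"
proof -
  define P where "P = (\<lambda>i. \<exists>v \<in> langn \<beta> i. \<exists>c d. c < d \<and> d \<le> bnum \<beta> \<and>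
                     w @ v @ [c] \<in> lang \<beta> \<and> w @ v @ [d] \<in> lang \<beta>)"
  have g: "gw \<beta> w = Inf {ereal (real i) | i. P i}" unfolding gw_def P_def by simp
  have "\<exists>i. P i"
  proof (rule ccontr)
    assume "\<not> (\<exists>i. P i)"
    hence "{ereal (real i) | i. P i} = {}" by simp
    hence "gw \<beta> w = \<infinity>" using g by (simp add: top_ereal_def)
    thus False using assms by simp
  qed
  hence P0: "P (LEAST i. P i)" by (rule LeastI_ex)
  have "ereal (real (LEAST i. P i)) \<le> Inf {ereal (real i) | i. P i}"
  proof (rule Inf_greatest)
    fix x assume "x \<in> {ereal (real i) | i. P i}"
    then obtain i where "P i" "x = ereal (real i)" by blast
    moreover have "(LEAST i. P i) \<le> i" using \<open>P i\<close> by (rule Least_le)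
    ultimately show "ereal (real (LEAST i. P i)) \<le> x" by simp
  qed
  hence "ereal (real (LEAST i. P i)) \<le> gw \<beta> w" using g by simp
  moreover obtain v c d where "v \<in> langn \<beta> (LEAST i. P i)" "c < d" "d \<le> bnum \<beta>"
            "w @ v @ [c] \<in> lang \<beta>" "w @ v @ [d] \<in> lang \<beta>" using P0 unfolding P_def by blast
  ultimately show ?thesis using that by blast
qed

lemma gw_nonneg: "0 \<le> gw \<beta> w"
  unfolding gw_def by (rule Inf_greatest) auto

theorem lemma6p4:
  fixes \<beta> :: real
  assumes "\<beta> > 1"
    and "yrrap \<beta>"
    and "((\<lambda>n. gn \<beta> n / ereal (real n)) \<longlongrightarrow> 0) sequentially"
  shows "liminf (\<lambda>n. INF w \<in> langn \<beta> n. ereal (1 / real n) * elog (Lmb \<beta> w) + ereal (ln \<beta>)) \<ge> 0"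
proof -
  note b = assms(1) and yr = assms(2) and lim = assms(3)
  have lb: "ln \<beta> > 0" using b by simp
  have dlp: "dl \<beta> > 0" using dl_props(1)[OF b yr] .
  show ?thesis
  proof (subst le_Liminf_iff, intro allI impI)
    fix y :: ereal assume "y < 0"
    then obtain z :: real where yz: "y < ereal z" and z0: "ereal z < 0" using ereal_dense2 by blast
    define e where "e = - z"
    have e0: "e > 0" using z0 unfolding e_def by simp
    define c where "c = e / (2 * ln \<beta>)"
    have c0: "c > 0" using e0 lb unfolding c_def by simp
    have E1: "eventually (\<lambda>n. gn \<beta> n / ereal (real n) < ereal c) sequentially"
      using order_tendstoD(2)[OF lim] c0 by simp
    define N0 where "N0 = nat \<lceil>2 * \<bar>ln (dl \<beta>)\<bar> / e\<rceil> + 1"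
    have E2: "eventually (\<lambda>n. n \<ge> N0) sequentially" by (rule eventually_ge_at_top)
    show "eventually (\<lambda>n. y < (INF w \<in> langn \<beta> n. ereal (1 / real n) * elog (Lmb \<beta> w) + ereal (ln \<beta>))) sequentially"
      using E1 E2
    proof eventually_elim
      case (elim n)
      have n0: "n > 0" using elim(2) unfolding N0_def by simp
      have nr: "real n > 0" using n0 by simp
      have lnd: "ln (dl \<beta>) / real n \<ge> - e / 2"
      proof -
        have "2 * \<bar>ln (dl \<beta>)\<bar> / e \<le> real N0" unfolding N0_def by linarith
        also have "\<dots> \<le> real n" using elim(2) by simp
        finally have "2 * \<bar>ln (dl \<beta>)\<bar> \<le> e * real n" using e0 by (simp add: field_simps)
        hence "\<bar>ln (dl \<beta>)\<bar> / real n \<le> e / 2" using nr by (simp add: field_simps)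
        moreover have "- (\<bar>ln (dl \<beta>)\<bar> / real n) \<le> ln (dl \<beta>) / real n" using nr
          by (simp add: field_simps)
        ultimately show ?thesis by linarith
      qed
      have "ereal z \<le> (INF w \<in> langn \<beta> n. ereal (1 / real n) * elog (Lmb \<beta> w) + ereal (ln \<beta>))"
      proof (rule INF_greatest)
        fix w assume w: "w \<in> langn \<beta> n"
        hence wl: "length w = n" unfolding langn_def by simp
        have gwn: "gw \<beta> w \<le> gn \<beta> n" unfolding gn_def using w by (rule SUP_upper)
        have gn0: "0 \<le> gn \<beta> n" using gw_nonneg[of \<beta> w] gwn by simp
        have gnfin: "gn \<beta> n \<noteq> \<infinity>"
        proof
          assume "gn \<beta> n = \<infinity>"
          hence "gn \<beta> n / ereal (real n) = \<infinity>" using nr by simp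
          thus False using elim(1) by simp
        qed
        then obtain r where r: "gn \<beta> n = ereal r" using gn0 by (cases "gn \<beta> n") auto
        have "ereal (r / real n) < ereal c" using elim(1) r nr by simp
        hence rc: "r / real n < c" by simp
        have "gw \<beta> w \<le> ereal r" using gwn r by simp
        hence gwf: "gw \<beta> w < \<infinity>" by (rule le_less_trans) simp
        obtain i v cc d where i: "ereal (real i) \<le> gw \<beta> w" and v: "v \<in> langn \<beta> i"
          and cd: "cc < d" "d \<le> bnum \<beta>" and wc: "w @ v @ [cc] \<in> lang \<beta>" and wd: "w @ v @ [d] \<in> lang \<beta>"
          by (rule gw_attained[OF gwf])
        have lv: "length v = i" using v unfolding langn_def by simp
        have ir: "real i \<le> r" using i gwn r by (metis ereal_less_eq(3) order.trans)
        have L: "Lmb \<beta> w \<ge> dl \<beta> / \<beta> ^ (n + i)" using cyl_lower[OF b yr wc wd cd] wl lv by simp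
        have bpow: "\<beta> ^ (n + i) > 0" using b by simp
        have Lp: "Lmb \<beta> w > 0" using L dlp bpow by (smt (verit) divide_pos_pos)
        have "ln (dl \<beta> / \<beta> ^ (n + i)) \<le> ln (Lmb \<beta> w)" using L Lp dlp bpow by simp
        hence lnL: "ln (dl \<beta>) - real (n + i) * ln \<beta> \<le> ln (Lmb \<beta> w)"
          using dlp bpow b by (simp add: ln_div ln_realpow)
        have "ln (dl \<beta>) / real n - real i * ln \<beta> / real n \<le> ln (Lmb \<beta> w) / real n + ln \<beta>"
        proof -
          have "(ln (dl \<beta>) - real (n + i) * ln \<beta>) / real n \<le> ln (Lmb \<beta> w) / real n"
            using lnL nr by (simp add: divide_right_mono)
          moreover have "(ln (dl \<beta>) - real (n + i) * ln \<beta>) / real n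
              = ln (dl \<beta>) / real n - real i * ln \<beta> / real n - ln \<beta>" using nr by (simp add: field_simps)
          ultimately show ?thesis by linarith
        qed
        moreover have "real i * ln \<beta> / real n \<le> e / 2"
        proof -
          have "real i / real n \<le> r / real n" using ir nr by (simp add: divide_right_mono)
          hence "real i / real n \<le> c" using rc by linarith
          hence "real i / real n * ln \<beta> \<le> c * ln \<beta>" by (rule mult_right_mono) (use lb in simp)
          also have "c * ln \<beta> = e / 2" unfolding c_def using lb by simp
          finally show ?thesis by simp
        qed
        ultimately have "z \<le> ln (Lmb \<beta> w) / real n + ln \<beta>" using lnd unfolding e_def by linarith
        moreover have "ereal (1 / real n) * elog (Lmb \<beta> w) + ereal (ln \<beta>) = ereal (ln (Lmb \<beta> w) / real n + ln \<beta>)"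
          using Lp unfolding elog_def by simp
        ultimately show "ereal z \<le> ereal (1 / real n) * elog (Lmb \<beta> w) + ereal (ln \<beta>)" by simp
      qed
      thus ?case using yz by (rule order.strict_trans2[rotated])
    qed
  qed
qed


end
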